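(* Let $P$ be (the normalised CFMDP of) a program over label set $\Sigma$, let $\Phi=(\varphi_e,\varphi_f)$ be a specification and let $\beta\in[0,1]$. Suppose there exist PCFAs $Q$ and $A$ over $\Sigma$ satisfying the following three conditions: (i) $\mathcal{L}(P)\subseteq\mathcal{L}(Q)\cup\mathcal{L}(A)$; (ii) for every $\tau\in\mathcal{L}(Q)$ and every state $s\models\varphi_e$, $[\![\tau]\!](s)\not\models\neg\varphi_f$, i.e. the Hoare triple $\{\varphi_e\}\,\tau\,\{\varphi_f\}$ holds; (iii) $\mathbb{P}^{\mathcal{L}}_\Phi(\mathcal{L}(A))\le\beta$. Then $\mathbb{P}_\Phi(P)\le\beta$.
   Context: Labels. $\Sigma$ is a finite label set. It contains probabilistic labels $\mathrm{Pb}_{(i,\mathtt{L})}$ and $\mathrm{Pb}_{(i,\mathtt{R})}$, one pair per identifier $i$ of a fair binary probabilistic choice. The other labels are non-random (set $\Sigma^-$: statements, assume-statements, non-deterministic labels $*_i$). PCFA. A PCFA is a tuple $(L,\Sigma,\delta,\ell_0,\ell_e)$ with $L$ finite, $\delta\subseteq L\times\Sigma\times L$ and unique accepting location $\ell_e$. Its language $\mathcal{L}$ is the set of finite words labelling paths from $\ell_0$ to $\ell_e$. CFMDP and CFMC. A CFMDP is a deterministic PCFA with no transitions out of $\ell_e$. The action of a transition labelled $\sigma\in\Sigma^-$ is $\sigma$, and that of a transition labelled $\mathrm{Pb}_{(i,d)}$ is $i$. A CFMC is a CFMDP in which all transitions out of each location share one action. A CFMDP is normalised if, whenever $\ell\xrightarrow{\mathrm{Pb}_{(i,\mathtt{L})}}\ell_1$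 and $\ell\xrightarrow{\mathrm{Pb}_{(i,\mathtt{R})}}\ell_2$ both exist, $\ell_1\neq\ell_2$. Strategies. $\mathcal{S}(\mathcal{A})$ is the set of finite-memory strategies for $\mathcal{A}$, and $\mathcal{A}^\psi$ is the CFMC obtained by applying $\psi$. Semantics and weight. Labels are interpreted as functions $[\![\sigma]\!]$ on program states, with probabilistic and non-deterministic labels interpreted as the identity. $[\![\sigma_1\cdots\sigma_n]\!]=[\![\sigma_n]\!]\circ\cdots\circ[\![\sigma_1]\!]$. $wt(\tau)=2^{-n}$, where $n$ is the number of probabilistic labels in $\tau$. Violation probabilities. $$\mathbb{P}_\Phi(\mathcal{A})=\sup_{s\models\varphi_e}\sup_{\psi\in\mathcal{S}(\mathcal{A})}\sum_{\tau\in\mathcal{L}(\mathcal{A}^\psi)}wt(\tau)\,[\,[\![\tau]\!](s)\models\neg\varphi_f\,].$$ A set $\Theta\subseteq\Sigma^*$ is mergeable if it equals $\mathcal{L}(\mathcal{M})$ for some CFMC $\mathcal{M}$, and $\mathrm{Mergeable}(\Theta)$ is the set of its mergeable subsets. Then $$\mathbb{P}^{\mathcal{L}}_\Phi(\Theta)=\sup_{s\models\varphi_e}\sup_{\Pi\in\mathrm{Mergeable}(\Theta)}\sum_{\tau\in\Pi}wt(\tau)\,[\,[\![\tau]\!](s)\models\neg\varphi_f\,].$$ *)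

theory Defs
  imports "HOL-Analysis.Analysis"
begin

datatype dir = DL | DR

text \<open>Labels: probabilistic labels Pb (i,L)/Pb (i,R) for an identifier i of a fair binary
  probabilistic choice, non-deterministic labels Nd n (written *_n in the paper), and
  the remaining non-random labels St a (statements and assume-statements).\<close>
datatype ('i, 'n, 'a) label = Pb 'i dir | Nd 'n | St 'a

fun is_prob :: "('i, 'n, 'a) label \<Rightarrow> bool" where
  "is_prob (Pb i d) = True"
| "is_prob (Nd n) = False"
| "is_prob (St a) = False"

fun act :: "('i, 'n, 'a) label \<Rightarrow> 'i + ('i, 'n, 'a) label" where
  "act (Pb i d) = Inl i"
| "act (Nd n) = Inr (Nd n)"
| "act (St a) = Inr (St a)"

record ('l, 'lab) pcfa =
  locs :: "'l set"
  trans :: "('l \<times> 'lab \<times> 'l) set"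
  init :: 'l
  final :: 'l

definition is_pcfa :: "'lab set \<Rightarrow> ('l, 'lab) pcfa \<Rightarrow> bool" where
  "is_pcfa Sig A \<longleftrightarrow> finite (locs A) \<and> trans A \<subseteq> locs A \<times> Sig \<times> locs A
     \<and> init A \<in> locs A \<and> final A \<in> locs A"

inductive path :: "('l \<times> 'lab \<times> 'l) set \<Rightarrow> 'l \<Rightarrow> 'lab list \<Rightarrow> 'l \<Rightarrow> bool"
  for \<delta> where
  path_nil: "path \<delta> l [] l"
| path_cons: "(l, \<sigma>, l') \<in> \<delta> \<Longrightarrow> path \<delta> l' w l'' \<Longrightarrow> path \<delta> l (\<sigma> # w) l''"

definition lang :: "('l, 'lab) pcfa \<Rightarrow> 'lab list set" where
  "lang A = {w. path (trans A) (init A) w (final A)}"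

definition deterministic :: "('l, 'lab) pcfa \<Rightarrow> bool" where
  "deterministic A \<longleftrightarrow> (\<forall>l \<sigma> l1 l2. (l, \<sigma>, l1) \<in> trans A \<longrightarrow> (l, \<sigma>, l2) \<in> trans A \<longrightarrow> l1 = l2)"

definition is_cfmdp :: "('i, 'n, 'a) label set \<Rightarrow> ('l, ('i, 'n, 'a) label) pcfa \<Rightarrow> bool" where
  "is_cfmdp Sig A \<longleftrightarrow> is_pcfa Sig A \<and> deterministic A
     \<and> (\<forall>\<sigma> l'. (final A, \<sigma>, l') \<notin> trans A)"

definition is_cfmc :: "('i, 'n, 'a) label set \<Rightarrow> ('l, ('i, 'n, 'a) label) pcfa \<Rightarrow> bool" where
  "is_cfmc Sig A \<longleftrightarrow> is_cfmdp Sig A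
     \<and> (\<forall>l \<sigma>1 l1 \<sigma>2 l2. (l, \<sigma>1, l1) \<in> trans A \<longrightarrow> (l, \<sigma>2, l2) \<in> trans A \<longrightarrow> act \<sigma>1 = act \<sigma>2)"

definition normalised :: "('l, ('i, 'n, 'a) label) pcfa \<Rightarrow> bool" where
  "normalised A \<longleftrightarrow> (\<forall>l i l1 l2. (l, Pb i DL, l1) \<in> trans A \<longrightarrow> (l, Pb i DR, l2) \<in> trans A
     \<longrightarrow> l1 \<noteq> l2)"

record ('l, 'i, 'n, 'a) strategy =
  mem :: "nat set"
  mem0 :: nat
  choice :: "'l \<Rightarrow> nat \<Rightarrow> 'i + ('i, 'n, 'a) label"
  upd :: "nat \<Rightarrow> 'l \<Rightarrow> ('i, 'n, 'a) label \<Rightarrow> nat"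

definition strategies ::
  "('l, ('i, 'n, 'a) label) pcfa \<Rightarrow> ('l, 'i, 'n, 'a) strategy set" where
  "strategies A = {\<psi>. finite (mem \<psi>) \<and> mem0 \<psi> \<in> mem \<psi>
     \<and> (\<forall>m\<in>mem \<psi>. \<forall>l \<sigma>. upd \<psi> m l \<sigma> \<in> mem \<psi>)
     \<and> (\<forall>l\<in>locs A. \<forall>m\<in>mem \<psi>. (\<exists>\<sigma> l'. (l, \<sigma>, l') \<in> trans A)
          \<longrightarrow> (\<exists>\<sigma> l'. (l, \<sigma>, l') \<in> trans A \<and> act \<sigma> = choice \<psi> l m))}"

text \<open>The CFMC obtained by applying a strategy: product of the CFMDP with the memory;
  all product locations over the accepting location are merged into the unique accepting
  location None.\<close>
definition lift_loc :: "('l, 'lab) pcfa \<Rightarrow> 'l \<Rightarrow> nat \<Rightarrow> ('l \<times> nat) option" where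
  "lift_loc A l m = (if l = final A then None else Some (l, m))"

definition apply_strategy ::
  "('l, ('i, 'n, 'a) label) pcfa \<Rightarrow> ('l, 'i, 'n, 'a) strategy
     \<Rightarrow> (('l \<times> nat) option, ('i, 'n, 'a) label) pcfa" where
  "apply_strategy A \<psi> =
    \<lparr> locs = insert None (Some ` ((locs A - {final A}) \<times> mem \<psi>)),
      trans = {(Some (l, m), \<sigma>, lift_loc A l' (upd \<psi> m l \<sigma>)) | l m \<sigma> l'.
                 (l, \<sigma>, l') \<in> trans A \<and> l \<noteq> final A \<and> m \<in> mem \<psi> \<and> act \<sigma> = choice \<psi> l m},
      init = lift_loc A (init A) (mem0 \<psi>),
      final = None \<rparr>"

fun lsem :: "('a \<Rightarrow> 'st \<Rightarrow> 'st) \<Rightarrow> ('i, 'n, 'a) label \<Rightarrow> 'st \<Rightarrow> 'st" where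
  "lsem sem (Pb i d) = id"
| "lsem sem (Nd n) = id"
| "lsem sem (St a) = sem a"

text \<open>[[s1 ... sn]] = [[sn]] o ... o [[s1]]\<close>
definition wsem :: "('a \<Rightarrow> 'st \<Rightarrow> 'st) \<Rightarrow> ('i, 'n, 'a) label list \<Rightarrow> 'st \<Rightarrow> 'st" where
  "wsem sem \<tau> = fold (lsem sem) \<tau>"

definition wt :: "('i, 'n, 'a) label list \<Rightarrow> real" where
  "wt \<tau> = (1 / 2) ^ length (filter is_prob \<tau>)"

definition viol_sum ::
  "('a \<Rightarrow> 'st \<Rightarrow> 'st) \<Rightarrow> ('st \<Rightarrow> bool) \<Rightarrow> 'st \<Rightarrow> ('i, 'n, 'a) label list set \<Rightarrow> ennreal" where
  "viol_sum sem \<phi>f s T = (\<Sum>\<^sub>\<infinity>\<tau>\<in>T. ennreal (wt \<tau>) * (if \<not> \<phi>f (wsem sem \<tau> s) then 1 else 0))"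

definition viol_prob ::
  "('a \<Rightarrow> 'st \<Rightarrow> 'st) \<Rightarrow> ('st \<Rightarrow> bool) \<Rightarrow> ('st \<Rightarrow> bool)
     \<Rightarrow> ('l, ('i, 'n, 'a) label) pcfa \<Rightarrow> ennreal" where
  "viol_prob sem \<phi>e \<phi>f A =
     (SUP s\<in>{s. \<phi>e s}. SUP \<psi>\<in>strategies A. viol_sum sem \<phi>f s (lang (apply_strategy A \<psi>)))"

text \<open>Mergeable subsets: languages of CFMCs (over the label set Sig; finite location
  sets are encoded in nat).\<close>
definition mergeable_subsets ::
  "('i, 'n, 'a) label set \<Rightarrow> ('i, 'n, 'a) label list set \<Rightarrow> ('i, 'n, 'a) label list set set" where
  "mergeable_subsets Sig \<Theta> =
     {Mg. Mg \<subseteq> \<Theta> \<and> (\<exists>M :: (nat, ('i, 'n, 'a) label) pcfa. is_cfmc Sig M \<and> lang M = Mg)}"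

definition lang_viol_prob ::
  "('i, 'n, 'a) label set \<Rightarrow> ('a \<Rightarrow> 'st \<Rightarrow> 'st) \<Rightarrow> ('st \<Rightarrow> bool) \<Rightarrow> ('st \<Rightarrow> bool)
     \<Rightarrow> ('i, 'n, 'a) label list set \<Rightarrow> ennreal" where
  "lang_viol_prob Sig sem \<phi>e \<phi>f \<Theta> =
     (SUP s\<in>{s. \<phi>e s}. SUP Mg\<in>mergeable_subsets Sig \<Theta>. viol_sum sem \<phi>f s Mg)"

end

theory Submission
  imports Defs
begin

definition mapA :: "('x \<Rightarrow> nat) \<Rightarrow> ('x, 'lab) pcfa \<Rightarrow> (nat, 'lab) pcfa" where
  "mapA f M = \<lparr> locs = f ` locs M, trans = (\<lambda>(l,\<sigma>,l'). (f l, \<sigma>, f l')) ` trans M,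
     init = f (init M), final = f (final M) \<rparr>"

lemma path_map1:
  "path \<delta> l w l' \<Longrightarrow> path ((\<lambda>(l,\<sigma>,l'). (f l, \<sigma>, f l')) ` \<delta>) (f l) w (f l')"
proof (induction rule: path.induct)
  case (path_nil l) then show ?case by (rule path.path_nil)
next
  case (path_cons l \<sigma> l' w l'')
  then show ?case by (intro path.path_cons[of _ _ "f l'"]) force+
qed

lemma path_map2:
  assumes "path ((\<lambda>(l,\<sigma>,l'). (f l, \<sigma>, f l')) ` \<delta>) x w y"
    and "\<delta> \<subseteq> X \<times> UNIV \<times> X" and "inj_on f X"
  shows "\<And>l l'. l \<in> X \<Longrightarrow> l' \<in> X \<Longrightarrow> x = f l \<Longrightarrow> y = f l' \<Longrightarrow> path \<delta> l w l'"
  using assms(1)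
proof (induction rule: path.induct)
  case (path_nil l0)
  then have "l = l'" using assms(3) by (metis inj_onD)
  then show ?case by (simp add: path.path_nil)
next
  case (path_cons x0 \<sigma> x1 w x2)
  from path_cons.hyps(1) obtain a a' where aa: "(a,\<sigma>,a') \<in> \<delta>" "x0 = f a" "x1 = f a'" by auto
  have "a \<in> X" "a' \<in> X" using aa(1) assms(2) by auto
  then have "a = l" using aa(2) path_cons.prems assms(3) by (metis inj_onD)
  moreover have "path \<delta> a' w l'" using path_cons.IH[of a' l'] path_cons.prems aa \<open>a' \<in> X\<close> by simp
  ultimately show ?case using aa(1) by (simp add: path.path_cons)
qed

lemma lang_mapA:
  assumes "is_pcfa Sig M" "inj_on f (locs M)"
  shows "lang (mapA f M) = lang M"
proof -
  have sub: "trans M \<subseteq> locs M \<times> UNIV \<times> locs M" using assms(1) unfolding is_pcfa_def by auto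
  show ?thesis unfolding lang_def mapA_def
    using path_map1[of "trans M" "init M" _ "final M" f]
      path_map2[OF _ sub assms(2), of "f (init M)" _ "f (final M)" "init M" "final M"]
      assms(1) unfolding is_pcfa_def by auto
qed

lemma mapA_simps[simp]:
  "locs (mapA f M) = f ` locs M" "init (mapA f M) = f (init M)" "final (mapA f M) = f (final M)"
  by (simp_all add: mapA_def)

lemma mapA_trans: "(x,\<sigma>,y) \<in> trans (mapA f M) \<longleftrightarrow> (\<exists>a b. (a,\<sigma>,b) \<in> trans M \<and> x = f a \<and> y = f b)"
proof
  assume "(x,\<sigma>,y) \<in> trans (mapA f M)"
  then obtain t where "t \<in> trans M" "(x,\<sigma>,y) = (\<lambda>(l,\<sigma>,l'). (f l, \<sigma>, f l')) t" unfolding mapA_def by auto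
  then show "\<exists>a b. (a,\<sigma>,b) \<in> trans M \<and> x = f a \<and> y = f b" by (cases t) auto
next
  assume "\<exists>a b. (a,\<sigma>,b) \<in> trans M \<and> x = f a \<and> y = f b"
  then obtain a b where "(a,\<sigma>,b) \<in> trans M" "x = f a" "y = f b" by blast
  then show "(x,\<sigma>,y) \<in> trans (mapA f M)" unfolding mapA_def by (auto intro!: image_eqI[where x="(a,\<sigma>,b)"])
qed

lemma cfmc_mapA:
  assumes "is_cfmc Sig M" "inj_on f (locs M)"
  shows "is_cfmc Sig (mapA f M)"
proof -
  have P: "is_pcfa Sig M" and D: "deterministic M" and F: "\<forall>\<sigma> l'. (final M, \<sigma>, l') \<notin> trans M"
    and C: "\<forall>l \<sigma>1 l1 \<sigma>2 l2. (l, \<sigma>1, l1) \<in> trans M \<longrightarrow> (l, \<sigma>2, l2) \<in> trans M \<longrightarrow> act \<sigma>1 = act \<sigma>2"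
    using assms(1) unfolding is_cfmc_def is_cfmdp_def by blast+
  have sub: "trans M \<subseteq> locs M \<times> Sig \<times> locs M" using P unfolding is_pcfa_def by blast
  have inj: "\<And>a b. a \<in> locs M \<Longrightarrow> b \<in> locs M \<Longrightarrow> f a = f b \<Longrightarrow> a = b" using assms(2) inj_onD by metis
  have "trans (mapA f M) \<subseteq> locs (mapA f M) \<times> Sig \<times> locs (mapA f M)"
  proof
    fix t assume "t \<in> trans (mapA f M)"
    then obtain x \<sigma> y where t: "t = (x,\<sigma>,y)" "(x,\<sigma>,y) \<in> trans (mapA f M)" by (cases t) auto
    then obtain a b where "(a,\<sigma>,b) \<in> trans M" "x = f a" "y = f b" using mapA_trans by metis
    then show "t \<in> locs (mapA f M) \<times> Sig \<times> locs (mapA f M)" using t sub by auto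
  qed
  then have "is_pcfa Sig (mapA f M)" using P unfolding is_pcfa_def by simp
  moreover have "deterministic (mapA f M)"
    unfolding deterministic_def
  proof (intro allI impI)
    fix x \<sigma> y1 y2
    assume "(x, \<sigma>, y1) \<in> trans (mapA f M)" "(x, \<sigma>, y2) \<in> trans (mapA f M)"
    then obtain a b c d where 1: "(a, \<sigma>, b) \<in> trans M" "(c, \<sigma>, d) \<in> trans M" "f a = f c"
      "y1 = f b" "y2 = f d" using mapA_trans by metis
    then have "a = c" using sub inj by blast
    then show "y1 = y2" using D 1 unfolding deterministic_def by blast
  qed
  moreover have "\<forall>\<sigma> l'. (final (mapA f M), \<sigma>, l') \<notin> trans (mapA f M)"
  proof (intro allI notI)
    fix \<sigma> l'
    assume "(final (mapA f M), \<sigma>, l') \<in> trans (mapA f M)"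
    then obtain a b where ab: "(a,\<sigma>,b) \<in> trans M" "f a = f (final M)" using mapA_trans mapA_simps(3) by metis
    have "a \<in> locs M" using ab(1) sub by blast
    moreover have "final M \<in> locs M" using P unfolding is_pcfa_def by blast
    ultimately have "a = final M" using inj ab(2) by blast
    then show False using ab(1) F by blast
  qed
  moreover have "\<forall>l \<sigma>1 l1 \<sigma>2 l2. (l, \<sigma>1, l1) \<in> trans (mapA f M) \<longrightarrow> (l, \<sigma>2, l2) \<in> trans (mapA f M) \<longrightarrow> act \<sigma>1 = act \<sigma>2"
  proof (intro allI impI)
    fix x \<sigma>1 y1 \<sigma>2 y2
    assume "(x, \<sigma>1, y1) \<in> trans (mapA f M)" "(x, \<sigma>2, y2) \<in> trans (mapA f M)"
    then obtain a b c d where 1: "(a, \<sigma>1, b) \<in> trans M" "(c, \<sigma>2, d) \<in> trans M" "f a = f c"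
      using mapA_trans by metis
    then have "a = c" using sub inj by blast
    then show "act \<sigma>1 = act \<sigma>2" using C 1 by blast
  qed
  ultimately show ?thesis unfolding is_cfmc_def is_cfmdp_def by blast
qed

lemma cfmc_to_nat:
  assumes "is_cfmc Sig (M :: ('x, ('i,'n,'a) label) pcfa)"
  shows "\<exists>N :: (nat, ('i,'n,'a) label) pcfa. is_cfmc Sig N \<and> lang N = lang M"
proof -
  have "finite (locs M)" using assms unfolding is_cfmc_def is_cfmdp_def is_pcfa_def by auto
  then obtain f :: "'x \<Rightarrow> nat" where "inj_on f (locs M)" using finite_imp_inj_to_nat_seg by blast
  moreover have "is_pcfa Sig M" using assms unfolding is_cfmc_def is_cfmdp_def by auto
  ultimately show ?thesis using cfmc_mapA lang_mapA assms by blast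
qed


section \<open>Product with subset construction\<close>

definition gm :: "'l \<Rightarrow> 'b \<Rightarrow> 'l \<Rightarrow> 'b set \<Rightarrow> ('l \<times> 'b set) option" where
  "gm fM fA q S = (if q = fM \<and> fA \<in> S then None else Some (q, S))"

definition post :: "('b \<times> 'lab \<times> 'b) set \<Rightarrow> 'b set \<Rightarrow> 'lab \<Rightarrow> 'b set" where
  "post \<delta> S \<sigma> = {b'. \<exists>b\<in>S. (b, \<sigma>, b') \<in> \<delta>}"

definition prodA :: "('l, 'lab) pcfa \<Rightarrow> ('b, 'lab) pcfa \<Rightarrow> (('l \<times> 'b set) option, 'lab) pcfa" where
  "prodA M A = \<lparr> locs = insert None ((\<lambda>(q, S). gm (final M) (final A) q S) ` (locs M \<times> Pow (locs A))),
     trans = {(gm (final M) (final A) q S, \<sigma>, gm (final M) (final A) q' (post (trans A) S \<sigma>)) | q S \<sigma> q'.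
               (q, \<sigma>, q') \<in> trans M \<and> S \<subseteq> locs A},
     init = gm (final M) (final A) (init M) {init A},
     final = None \<rparr>"

lemma prodA_simps[simp]:
  "locs (prodA M A) = insert None ((\<lambda>(q, S). gm (final M) (final A) q S) ` (locs M \<times> Pow (locs A)))"
  "init (prodA M A) = gm (final M) (final A) (init M) {init A}"
  "final (prodA M A) = None"
  by (simp_all add: prodA_def)

lemma prodA_trans:
  "(x, \<sigma>, y) \<in> trans (prodA M A) \<longleftrightarrow> (\<exists>q S q'. (q, \<sigma>, q') \<in> trans M \<and> S \<subseteq> locs A
      \<and> x = gm (final M) (final A) q S \<and> y = gm (final M) (final A) q' (post (trans A) S \<sigma>))"
  unfolding prodA_def by auto

lemma gm_None: "gm fM fA q S = None \<longleftrightarrow> q = fM \<and> fA \<in> S"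
  by (simp add: gm_def)

lemma gm_nonfinal: "q \<noteq> fM \<Longrightarrow> gm fM fA q S = Some (q, S)"
  by (simp add: gm_def)

lemma gm_Some: "gm fM fA q S = Some p \<Longrightarrow> p = (q, S)"
  by (simp add: gm_def split: if_splits)

lemma prod_path1:
  assumes "path (trans M) q w e"
  shows "e = final M \<Longrightarrow> S \<subseteq> locs A \<Longrightarrow> trans A \<subseteq> locs A \<times> UNIV \<times> locs A \<Longrightarrow> \<exists>b\<in>S. path (trans A) b w (final A)
     \<Longrightarrow> path (trans (prodA M A)) (gm (final M) (final A) q S) w None"
  using assms
proof (induction arbitrary: S rule: path.induct)
  case (path_nil l)
  then obtain b where "b \<in> S" "path (trans A) b [] (final A)" by blast
  then have "final A \<in> S" by (auto elim: path.cases)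
  then show ?case using path_nil.prems(1) by (simp add: gm_def path.path_nil)
next
  case (path_cons l \<sigma> l' w l'')
  then obtain b where b: "b \<in> S" "path (trans A) b (\<sigma> # w) (final A)" by blast
  then obtain b' where b': "(b, \<sigma>, b') \<in> trans A" "path (trans A) b' w (final A)"
    by (auto elim: path.cases)
  have "b' \<in> post (trans A) S \<sigma>" using b b' unfolding post_def by blast
  then have ex: "\<exists>b\<in>post (trans A) S \<sigma>. path (trans A) b w (final A)" using b'(2) by blast
  have pS: "post (trans A) S \<sigma> \<subseteq> locs A" using path_cons.prems(3) unfolding post_def by blast
  have "path (trans (prodA M A)) (gm (final M) (final A) l' (post (trans A) S \<sigma>)) w None"
    by (rule path_cons.IH[OF path_cons.prems(1) pS path_cons.prems(3) ex])
  moreover have "(gm (final M) (final A) l S, \<sigma>, gm (final M) (final A) l' (post (trans A) S \<sigma>)) \<in> trans (prodA M A)"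
    unfolding prodA_trans using path_cons.hyps(1) path_cons.prems(2) by blast
  ultimately show ?case by (metis path.path_cons)
qed

lemma prod_path2:
  assumes "path (trans (prodA M A)) x w y" and F: "\<forall>\<sigma> l'. (final M, \<sigma>, l') \<notin> trans M"
  shows "y = None \<Longrightarrow> x = gm (final M) (final A) q S
     \<Longrightarrow> path (trans M) q w (final M) \<and> (\<exists>b\<in>S. path (trans A) b w (final A))"
  using assms(1)
proof (induction arbitrary: q S rule: path.induct)
  case (path_nil l)
  then have "q = final M" "final A \<in> S" using gm_None by metis+
  then show ?case using path.path_nil[of "trans M" q] path.path_nil[of "trans A" "final A"] by blast
next
  case (path_cons x0 \<sigma> x1 w x2)
  then obtain q0 S0 q0' where t: "(q0, \<sigma>, q0') \<in> trans M" "S0 \<subseteq> locs A"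
    "x0 = gm (final M) (final A) q0 S0" "x1 = gm (final M) (final A) q0' (post (trans A) S0 \<sigma>)"
    unfolding prodA_trans by blast
  have "q0 \<noteq> final M" using t(1) F by blast
  then have "x0 = Some (q0, S0)" using t(3) gm_nonfinal by metis
  then have "(q0, S0) = (q, S)" using path_cons.prems(2) gm_Some by metis
  then have qS: "q0 = q" "S0 = S" by auto
  from path_cons.IH[OF path_cons.prems(1) t(4)]
  obtain b' where "path (trans M) q0' w (final M)" "b' \<in> post (trans A) S0 \<sigma>" "path (trans A) b' w (final A)"
    by blast
  then show ?case using t(1) qS unfolding post_def by (auto intro: path.path_cons)
qed

lemma lang_prodA:
  assumes "\<forall>\<sigma> l'. (final M, \<sigma>, l') \<notin> trans M" "is_pcfa Sig A"
  shows "lang (prodA M A) = lang M \<inter> lang A"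
proof -
  have sub: "trans A \<subseteq> locs A \<times> UNIV \<times> locs A" and ini: "{init A} \<subseteq> locs A"
    using assms(2) unfolding is_pcfa_def by blast+
  show ?thesis
  proof (intro equalityI subsetI)
    fix w assume "w \<in> lang (prodA M A)"
    then have "path (trans (prodA M A)) (gm (final M) (final A) (init M) {init A}) w None"
      unfolding lang_def by simp
    from prod_path2[OF this assms(1) refl refl]
    show "w \<in> lang M \<inter> lang A" unfolding lang_def by auto
  next
    fix w assume "w \<in> lang M \<inter> lang A"
    then show "w \<in> lang (prodA M A)" unfolding lang_def
      using prod_path1[where M=M and q="init M" and w=w and S="{init A}" and A=A and e="final M"] sub ini by auto
  qed
qed

lemma cfmc_prodA:
  assumes "is_cfmc Sig M" "is_pcfa Sig A"
  shows "is_cfmc Sig (prodA M A)"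
proof -
  have P: "is_pcfa Sig M" and D: "deterministic M" and F: "\<forall>\<sigma> l'. (final M, \<sigma>, l') \<notin> trans M"
    and C: "\<forall>l \<sigma>1 l1 \<sigma>2 l2. (l, \<sigma>1, l1) \<in> trans M \<longrightarrow> (l, \<sigma>2, l2) \<in> trans M \<longrightarrow> act \<sigma>1 = act \<sigma>2"
    using assms(1) unfolding is_cfmc_def is_cfmdp_def by blast+
  have sub: "trans M \<subseteq> locs M \<times> Sig \<times> locs M" and fin: "finite (locs M)" and iM: "init M \<in> locs M"
    using P unfolding is_pcfa_def by blast+
  have subA: "trans A \<subseteq> locs A \<times> Sig \<times> locs A" and finA: "finite (locs A)" and iA: "init A \<in> locs A"
    using assms(2) unfolding is_pcfa_def by blast+
  have inl: "\<And>q S. q \<in> locs M \<Longrightarrow> S \<subseteq> locs A \<Longrightarrow> gm (final M) (final A) q S \<in> locs (prodA M A)"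
    by auto
  have postsub: "\<And>S \<sigma>. post (trans A) S \<sigma> \<subseteq> locs A" using subA unfolding post_def by blast
  have "trans (prodA M A) \<subseteq> locs (prodA M A) \<times> Sig \<times> locs (prodA M A)"
  proof
    fix t assume t0: "t \<in> trans (prodA M A)"
    obtain x \<sigma> y where t: "t = (x, \<sigma>, y)" by (cases t) auto
    have "(x, \<sigma>, y) \<in> trans (prodA M A)" using t0 t by simp
    then obtain q S q' where "(q, \<sigma>, q') \<in> trans M" "S \<subseteq> locs A"
      "x = gm (final M) (final A) q S" "y = gm (final M) (final A) q' (post (trans A) S \<sigma>)"
      unfolding prodA_trans by blast
    moreover then have "q \<in> locs M" "q' \<in> locs M" "\<sigma> \<in> Sig" using sub by blast+
    ultimately show "t \<in> locs (prodA M A) \<times> Sig \<times> locs (prodA M A)"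
      using t inl postsub by blast
  qed
  moreover have "finite (locs (prodA M A))" using fin finA by simp
  moreover have "init (prodA M A) \<in> locs (prodA M A)" using inl iM iA by simp
  moreover have "final (prodA M A) \<in> locs (prodA M A)" by simp
  ultimately have "is_pcfa Sig (prodA M A)" unfolding is_pcfa_def by blast
  moreover have "deterministic (prodA M A)"
    unfolding deterministic_def
  proof (intro allI impI)
    fix x \<sigma> y1 y2
    assume "(x, \<sigma>, y1) \<in> trans (prodA M A)" "(x, \<sigma>, y2) \<in> trans (prodA M A)"
    then obtain q1 S1 q1' q2 S2 q2' where 1: "(q1, \<sigma>, q1') \<in> trans M" 
      "x = gm (final M) (final A) q1 S1" "y1 = gm (final M) (final A) q1' (post (trans A) S1 \<sigma>)"
      "(q2, \<sigma>, q2') \<in> trans M" 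
      "x = gm (final M) (final A) q2 S2" "y2 = gm (final M) (final A) q2' (post (trans A) S2 \<sigma>)"
      unfolding prodA_trans by blast
    have "q1 \<noteq> final M" "q2 \<noteq> final M" using 1 F by blast+
    then have "Some (q1, S1) = Some (q2, S2)" using 1 gm_nonfinal by metis
    then have "q1 = q2" "S1 = S2" by auto
    moreover then have "q1' = q2'" using D 1 unfolding deterministic_def by blast
    ultimately show "y1 = y2" using 1 by simp
  qed
  moreover have "\<forall>\<sigma> l'. (final (prodA M A), \<sigma>, l') \<notin> trans (prodA M A)"
  proof (intro allI notI)
    fix \<sigma> l'
    assume "(final (prodA M A), \<sigma>, l') \<in> trans (prodA M A)"
    then obtain q S q' where "(q, \<sigma>, q') \<in> trans M" "None = gm (final M) (final A) q S"
      unfolding prodA_trans prodA_simps by blast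
    then show False using F gm_None by metis
  qed
  moreover have "\<forall>l \<sigma>1 l1 \<sigma>2 l2. (l, \<sigma>1, l1) \<in> trans (prodA M A) \<longrightarrow> (l, \<sigma>2, l2) \<in> trans (prodA M A) \<longrightarrow> act \<sigma>1 = act \<sigma>2"
  proof (intro allI impI)
    fix x \<sigma>1 y1 \<sigma>2 y2
    assume "(x, \<sigma>1, y1) \<in> trans (prodA M A)" "(x, \<sigma>2, y2) \<in> trans (prodA M A)"
    then obtain q1 S1 q1' q2 S2 q2' where 1: "(q1, \<sigma>1, q1') \<in> trans M" 
      "x = gm (final M) (final A) q1 S1"
      "(q2, \<sigma>2, q2') \<in> trans M" 
      "x = gm (final M) (final A) q2 S2"
      unfolding prodA_trans by blast
    have "q1 \<noteq> final M" "q2 \<noteq> final M" using 1 F by blast+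
    then have "Some (q1, S1) = Some (q2, S2)" using 1 gm_nonfinal by metis
    then have "q1 = q2" by auto
    then show "act \<sigma>1 = act \<sigma>2" using C 1 by blast
  qed
  ultimately show ?thesis unfolding is_cfmc_def is_cfmdp_def by blast
qed


section \<open>Applied strategies\<close>

lemma apply_simps[simp]:
  "locs (apply_strategy P \<psi>) = insert None (Some ` ((locs P - {final P}) \<times> mem \<psi>))"
  "init (apply_strategy P \<psi>) = lift_loc P (init P) (mem0 \<psi>)"
  "final (apply_strategy P \<psi>) = None"
  by (simp_all add: apply_strategy_def)

lemma apply_trans:
  "(x, \<sigma>, y) \<in> trans (apply_strategy P \<psi>) \<longleftrightarrow> (\<exists>l m l'. x = Some (l, m) \<and> y = lift_loc P l' (upd \<psi> m l \<sigma>)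
     \<and> (l, \<sigma>, l') \<in> trans P \<and> l \<noteq> final P \<and> m \<in> mem \<psi> \<and> act \<sigma> = choice \<psi> l m)"
  unfolding apply_strategy_def by auto

lemma lift_in:
  assumes "l \<in> locs P" "m \<in> mem \<psi>"
  shows "lift_loc P l m \<in> locs (apply_strategy P \<psi>)"
  using assms unfolding lift_loc_def by auto

lemma cfmc_apply:
  assumes "is_cfmdp Sig P" "\<psi> \<in> strategies P"
  shows "is_cfmc Sig (apply_strategy P \<psi>)"
proof -
  have P: "is_pcfa Sig P" and D: "deterministic P"
    using assms(1) unfolding is_cfmdp_def by blast+
  have sub: "trans P \<subseteq> locs P \<times> Sig \<times> locs P" and fin: "finite (locs P)" and iP: "init P \<in> locs P"
    using P unfolding is_pcfa_def by blast+
  have fm: "finite (mem \<psi>)" and m0: "mem0 \<psi> \<in> mem \<psi>" and up: "\<And>m l \<sigma>. m \<in> mem \<psi> \<Longrightarrow> upd \<psi> m l \<sigma> \<in> mem \<psi>"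
    using assms(2) unfolding strategies_def by blast+
  have "trans (apply_strategy P \<psi>) \<subseteq> locs (apply_strategy P \<psi>) \<times> Sig \<times> locs (apply_strategy P \<psi>)"
  proof
    fix t assume t0: "t \<in> trans (apply_strategy P \<psi>)"
    obtain x \<sigma> y where t: "t = (x, \<sigma>, y)" by (cases t) auto
    have "(x, \<sigma>, y) \<in> trans (apply_strategy P \<psi>)" using t0 t by simp
    then obtain l m l' where 1: "x = Some (l, m)" "y = lift_loc P l' (upd \<psi> m l \<sigma>)"
      "(l, \<sigma>, l') \<in> trans P" "l \<noteq> final P" "m \<in> mem \<psi>"
      unfolding apply_trans by blast
    have 2: "l \<in> locs P" "l' \<in> locs P" "\<sigma> \<in> Sig" using 1(3) sub by blast+
    have "x \<in> locs (apply_strategy P \<psi>)" using 1 2 by simp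
    moreover have "y \<in> locs (apply_strategy P \<psi>)" using 1(2) lift_in[OF 2(2) up[OF 1(5)]] by simp
    ultimately show "t \<in> locs (apply_strategy P \<psi>) \<times> Sig \<times> locs (apply_strategy P \<psi>)"
      using t 2 by blast
  qed
  moreover have "finite (locs (apply_strategy P \<psi>))" using fin fm by simp
  moreover have "init (apply_strategy P \<psi>) \<in> locs (apply_strategy P \<psi>)"
    using lift_in[OF iP m0] by simp
  moreover have "final (apply_strategy P \<psi>) \<in> locs (apply_strategy P \<psi>)" by simp
  ultimately have "is_pcfa Sig (apply_strategy P \<psi>)" unfolding is_pcfa_def by blast
  moreover have "deterministic (apply_strategy P \<psi>)"
    unfolding deterministic_def
  proof (intro allI impI)
    fix x \<sigma> y1 y2
    assume a: "(x, \<sigma>, y1) \<in> trans (apply_strategy P \<psi>)" "(x, \<sigma>, y2) \<in> trans (apply_strategy P \<psi>)"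
    from a(1) obtain l m l' where 1: "x = Some (l, m)" "y1 = lift_loc P l' (upd \<psi> m l \<sigma>)" "(l, \<sigma>, l') \<in> trans P"
      unfolding apply_trans by blast
    from a(2) obtain k n k' where 2: "x = Some (k, n)" "y2 = lift_loc P k' (upd \<psi> n k \<sigma>)" "(k, \<sigma>, k') \<in> trans P"
      unfolding apply_trans by blast
    have "k = l" "n = m" using 1 2 by auto
    moreover then have "k' = l'" using D 1 2 unfolding deterministic_def by blast
    ultimately show "y1 = y2" using 1 2 by simp
  qed
  moreover have "\<forall>\<sigma> l'. (final (apply_strategy P \<psi>), \<sigma>, l') \<notin> trans (apply_strategy P \<psi>)"
    unfolding apply_trans apply_simps by blast
  moreover have "\<forall>l \<sigma>1 l1 \<sigma>2 l2. (l, \<sigma>1, l1) \<in> trans (apply_strategy P \<psi>) \<longrightarrow> (l, \<sigma>2, l2) \<in> trans (apply_strategy P \<psi>) \<longrightarrow> act \<sigma>1 = act \<sigma>2"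
  proof (intro allI impI)
    fix x \<sigma>1 y1 \<sigma>2 y2
    assume a: "(x, \<sigma>1, y1) \<in> trans (apply_strategy P \<psi>)" "(x, \<sigma>2, y2) \<in> trans (apply_strategy P \<psi>)"
    from a(1) obtain l m where 1: "x = Some (l, m)" "act \<sigma>1 = choice \<psi> l m"
      unfolding apply_trans by blast
    from a(2) obtain k n where 2: "x = Some (k, n)" "act \<sigma>2 = choice \<psi> k n"
      unfolding apply_trans by blast
    show "act \<sigma>1 = act \<sigma>2" using 1 2 by simp
  qed
  ultimately show ?thesis unfolding is_cfmc_def is_cfmdp_def by blast
qed

lemma apply_path:
  assumes "path (trans (apply_strategy P \<psi>)) x w y"
  shows "y = None \<Longrightarrow> x = lift_loc P l m \<Longrightarrow> path (trans P) l w (final P)"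
  using assms
proof (induction arbitrary: l m rule: path.induct)
  case (path_nil x)
  then have "l = final P" unfolding lift_loc_def by (simp split: if_splits)
  then show ?case by (simp add: path.path_nil)
next
  case (path_cons x0 \<sigma> x1 w x2)
  from path_cons.hyps(1) obtain l0 m0 l0' where 1: "x0 = Some (l0, m0)"
    "x1 = lift_loc P l0' (upd \<psi> m0 l0 \<sigma>)" "(l0, \<sigma>, l0') \<in> trans P"
    unfolding apply_trans by blast
  have "l = l0" using path_cons.prems(2) 1(1) unfolding lift_loc_def by (simp split: if_splits)
  moreover have "path (trans P) l0' w (final P)" by (rule path_cons.IH[OF path_cons.prems(1) 1(2)])
  ultimately show ?case using 1(3) by (metis path.path_cons)
qed

lemma lang_apply: "lang (apply_strategy P \<psi>) \<subseteq> lang P"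
proof
  fix w assume "w \<in> lang (apply_strategy P \<psi>)"
  then have "path (trans (apply_strategy P \<psi>)) (lift_loc P (init P) (mem0 \<psi>)) w None"
    unfolding lang_def by simp
  from apply_path[OF this refl refl] show "w \<in> lang P" unfolding lang_def by simp
qed

theorem mainTheorem5:
  fixes Sig :: "('i, 'n, 'a) label set"
    and sem :: "'a \<Rightarrow> 'st \<Rightarrow> 'st"
    and \<phi>e \<phi>f :: "'st \<Rightarrow> bool"
    and P :: "('p, ('i, 'n, 'a) label) pcfa"
    and Q :: "('q, ('i, 'n, 'a) label) pcfa"
    and A :: "('b, ('i, 'n, 'a) label) pcfa"
    and \<beta> :: real
  assumes "finite Sig"
    and "is_cfmdp Sig P" and "normalised P"
    and "0 \<le> \<beta>" and "\<beta> \<le> 1"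
    and "is_pcfa Sig Q" and "is_pcfa Sig A"
    and "lang P \<subseteq> lang Q \<union> lang A"
    and "\<forall>\<tau>\<in>lang Q. \<forall>s. \<phi>e s \<longrightarrow> \<phi>f (wsem sem \<tau> s)"
    and "lang_viol_prob Sig sem \<phi>e \<phi>f (lang A) \<le> ennreal \<beta>"
  shows "viol_prob sem \<phi>e \<phi>f P \<le> ennreal \<beta>"
  unfolding viol_prob_def
proof (intro SUP_least)
  fix s \<psi>
  assume s: "s \<in> {s. \<phi>e s}" and \<psi>: "\<psi> \<in> strategies P"
  define L where "L = lang (apply_strategy P \<psi>)"
  define Mg where "Mg = L \<inter> lang A"
  have cM: "is_cfmc Sig (apply_strategy P \<psi>)" using cfmc_apply[OF assms(2) \<psi>] .
  have F: "\<forall>\<sigma> l'. (final (apply_strategy P \<psi>), \<sigma>, l') \<notin> trans (apply_strategy P \<psi>)"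
    using cM unfolding is_cfmc_def is_cfmdp_def by blast
  have "is_cfmc Sig (prodA (apply_strategy P \<psi>) A)" using cfmc_prodA[OF cM assms(7)] .
  then obtain N :: "(nat, ('i, 'n, 'a) label) pcfa" where N: "is_cfmc Sig N"
    "lang N = lang (prodA (apply_strategy P \<psi>) A)"
    using cfmc_to_nat by blast
  have "lang N = Mg" using N(2) lang_prodA[OF F assms(7)] unfolding Mg_def L_def by simp
  then have Mgin: "Mg \<in> mergeable_subsets Sig (lang A)"
    unfolding mergeable_subsets_def Mg_def using N(1) by blast
  have eq: "viol_sum sem \<phi>f s L = viol_sum sem \<phi>f s Mg"
    unfolding viol_sum_def
  proof (rule infsum_cong_neutral)
    fix \<tau> assume "\<tau> \<in> L - Mg"
    then have "\<tau> \<in> lang P" "\<tau> \<notin> lang A" using lang_apply unfolding L_def Mg_def by blast+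
    then have "\<tau> \<in> lang Q" using assms(8) by blast
    then have "\<phi>f (wsem sem \<tau> s)" using assms(9) s by blast
    then show "ennreal (wt \<tau>) * (if \<not> \<phi>f (wsem sem \<tau> s) then 1 else 0) = 0" by simp
  next
    fix \<tau> assume "\<tau> \<in> Mg - L"
    then show "ennreal (wt \<tau>) * (if \<not> \<phi>f (wsem sem \<tau> s) then 1 else 0) = 0" unfolding Mg_def by blast
  qed simp
  have "viol_sum sem \<phi>f s Mg \<le> (SUP Mg\<in>mergeable_subsets Sig (lang A). viol_sum sem \<phi>f s Mg)"
    using Mgin by (rule SUP_upper)
  also have "\<dots> \<le> lang_viol_prob Sig sem \<phi>e \<phi>f (lang A)"
    unfolding lang_viol_prob_def using s by (rule SUP_upper)
  also have "\<dots> \<le> ennreal \<beta>" using assms(10) .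
  finally show "viol_sum sem \<phi>f s (lang (apply_strategy P \<psi>)) \<le> ennreal \<beta>"
    using eq unfolding L_def by simp
qed

end
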